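(* Fix a positive integer $n$, a nonzero $n$-partition $\lambda$ with $\lambda_n=0$, an $n$-semistandard tableau $T$ of shape $\lambda$, a column $1\le l<\lambda_1$ and a location $(j,i)>(l,1)$ in reading order. Then the scanning path $P(T;l,k)$ ($1\le k\le c_l$) that contains $(j,i)$ is the one whose most recent value relative to $(j,i)$ is the largest among those most recent values (over $1\le k\le c_l$) that are less than or equal to $T(j,i)$.
   Context: Identify $\lambda=(\lambda_1,\dots,\lambda_n)$ (weakly decreasing nonnegative integers, $\lambda_n=0$, $\lambda\ne0$) with its Young diagram; $c_j$ is the length of column $j$; $(j,i)$ is the box in column $j$, row $i$. Reading order: $(l,k)\le(j,i)$ iff $l<j$, or $l=j$ and $k\ge i$. An $n$-semistandard tableau $T$ of shape $\lambda$ has entries in $[n]$, weakly increasing along rows, strictly increasing down columns; $T(j,i)$ is its entry. The EWIS of a sequence $x_1,x_2,\dots$ is $x_{a_1},x_{a_2},\dots$ with $a_1=1$ and $a_b$ the smallest index $>a_{b-1}$ with $x_{a_b}\ge x_{a_{b-1}}$. Scanning paths: for each column $l$ and $k=c_l,c_l-1,\dots,1$ in turn, delete the boxes of the previously computed $P(T;l,k')$, $k'>k$ (leaving a semistandard tableau of valid shape); form the sequence of entries in the lowest box of each of columns $l,\dots,\lambda_1$ of the current shape (skipping empty columns); $P(T;l,k)$ is the set of locations of the terms of its EWIS. Every location $(a,b)\ge(l,c_l)$ lies in exactly one $P(T;l,k)$. For $(j,i)>(l,1)$, the most recent location of $P(T;l,k)$ relative to $(j,i)$ is the latest location (in reading order)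 of $P(T;l,k)$ strictly before $(j,i)$, and the most recent value is the entry of $T$ there. *)

theory Defs
  imports Main
begin

text \<open>Partitions are functions lam :: nat => nat, meaningful on 1..n (lam i = lambda_i).
Boxes are pairs (j,i) = (column, row).\<close>

definition is_partition :: "nat \<Rightarrow> (nat \<Rightarrow> nat) \<Rightarrow> bool" where
  "is_partition n lam \<longleftrightarrow>
     (\<forall>i j. 1 \<le> i \<and> i \<le> j \<and> j \<le> n \<longrightarrow> lam j \<le> lam i) \<and>
     lam n = 0 \<and> (\<exists>i\<in>{1..n}. lam i \<noteq> 0)"

definition young :: "nat \<Rightarrow> (nat \<Rightarrow> nat) \<Rightarrow> (nat \<times> nat) set" where
  "young n lam = {(j, i). 1 \<le> i \<and> i \<le> n \<and> 1 \<le> j \<and> j \<le> lam i}"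

definition col_len :: "nat \<Rightarrow> (nat \<Rightarrow> nat) \<Rightarrow> nat \<Rightarrow> nat" where
  "col_len n lam j = card {i \<in> {1..n}. j \<le> lam i}"

definition semistandard :: "nat \<Rightarrow> (nat \<Rightarrow> nat) \<Rightarrow> (nat \<Rightarrow> nat \<Rightarrow> nat) \<Rightarrow> bool" where
  "semistandard n lam T \<longleftrightarrow>
     (\<forall>(j, i) \<in> young n lam. 1 \<le> T j i \<and> T j i \<le> n) \<and>
     (\<forall>j i. (j, i) \<in> young n lam \<and> (Suc j, i) \<in> young n lam \<longrightarrow> T j i \<le> T (Suc j) i) \<and>
     (\<forall>j i. (j, i) \<in> young n lam \<and> (j, Suc i) \<in> young n lam \<longrightarrow> T j i < T j (Suc i))"

definition rd_le :: "nat \<times> nat \<Rightarrow> nat \<times> nat \<Rightarrow> bool" where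
  "rd_le p q \<longleftrightarrow> fst p < fst q \<or> (fst p = fst q \<and> snd p \<ge> snd q)"

definition rd_less :: "nat \<times> nat \<Rightarrow> nat \<times> nat \<Rightarrow> bool" where
  "rd_less p q \<longleftrightarrow> rd_le p q \<and> p \<noteq> q"

fun ewis_ge :: "nat \<Rightarrow> ('a \<times> nat) list \<Rightarrow> 'a list" where
  "ewis_ge x [] = []"
| "ewis_ge x ((a, y) # rest) = (if x \<le> y then a # ewis_ge y rest else ewis_ge x rest)"

fun ewis :: "('a \<times> nat) list \<Rightarrow> 'a list" where
  "ewis [] = []"
| "ewis ((a, x) # rest) = a # ewis_ge x rest"

definition lowest :: "(nat \<times> nat) set \<Rightarrow> nat \<Rightarrow> nat" where
  "lowest S j = Max {i. (j, i) \<in> S}"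

definition scan_seq :: "(nat \<Rightarrow> nat \<Rightarrow> nat) \<Rightarrow> nat \<Rightarrow> nat \<Rightarrow> (nat \<times> nat) set
    \<Rightarrow> ((nat \<times> nat) \<times> nat) list" where
  "scan_seq T lam1 l S =
     map (\<lambda>j. ((j, lowest S j), T j (lowest S j)))
         (filter (\<lambda>j. \<exists>i. (j, i) \<in> S) [l..<Suc lam1])"

definition scan_step :: "(nat \<Rightarrow> nat \<Rightarrow> nat) \<Rightarrow> nat \<Rightarrow> nat \<Rightarrow> (nat \<times> nat) set
    \<Rightarrow> (nat \<times> nat) set" where
  "scan_step T lam1 l S = set (ewis (scan_seq T lam1 l S))"

text \<open>Union of the first m computed scanning paths P(T;l,c_l), ..., P(T;l,c_l-m+1).\<close>
fun scan_removed :: "nat \<Rightarrow> (nat \<Rightarrow> nat) \<Rightarrow> (nat \<Rightarrow> nat \<Rightarrow> nat) \<Rightarrow> nat \<Rightarrow> nat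
    \<Rightarrow> (nat \<times> nat) set" where
  "scan_removed n lam T l 0 = {}"
| "scan_removed n lam T l (Suc m) =
     scan_removed n lam T l m \<union> scan_step T (lam 1) l (young n lam - scan_removed n lam T l m)"

definition scan_path :: "nat \<Rightarrow> (nat \<Rightarrow> nat) \<Rightarrow> (nat \<Rightarrow> nat \<Rightarrow> nat) \<Rightarrow> nat \<Rightarrow> nat
    \<Rightarrow> (nat \<times> nat) set" where
  "scan_path n lam T l k =
     scan_step T (lam 1) l (young n lam - scan_removed n lam T l (col_len n lam l - k))"

definition most_recent_loc :: "(nat \<times> nat) set \<Rightarrow> nat \<times> nat \<Rightarrow> nat \<times> nat" where
  "most_recent_loc P x = (THE p. p \<in> P \<and> rd_less p x \<and> (\<forall>q\<in>P. rd_less q x \<longrightarrow> rd_le q p))"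

definition most_recent_val :: "(nat \<Rightarrow> nat \<Rightarrow> nat) \<Rightarrow> (nat \<times> nat) set \<Rightarrow> nat \<times> nat \<Rightarrow> nat" where
  "most_recent_val T P x = (case most_recent_loc P x of (a, b) \<Rightarrow> T a b)"

end

theory Submission
  imports Defs
begin


lemma ewis_ge_char:
  assumes "sorted_wrt (<) (js::nat list)"
  shows "set (ewis_ge x (map (\<lambda>j. (f j, g j)) js)) =
         f ` {j \<in> set js. x \<le> g j \<and> (\<forall>j'\<in>set js. j' < j \<longrightarrow> g j' \<le> g j)}"
  using assms
proof (induction js arbitrary: x)
  case Nil then show ?case by simp
next
  case (Cons a js)
  have s: "sorted_wrt (<) js" and lt: "\<forall>y\<in>set js. a < y" using Cons.prems by auto
  show ?case
  proof (cases "x \<le> g a")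
    case True
    have "set (ewis_ge x (map (\<lambda>j. (f j, g j)) (a#js))) = insert (f a) (set (ewis_ge (g a) (map (\<lambda>j. (f j, g j)) js)))"
      using True by simp
    also have "\<dots> = insert (f a) (f ` {j \<in> set js. g a \<le> g j \<and> (\<forall>j'\<in>set js. j' < j \<longrightarrow> g j' \<le> g j)})"
      using Cons.IH[OF s] by simp
    also have "\<dots> = f ` {j \<in> set (a#js). x \<le> g j \<and> (\<forall>j'\<in>set (a#js). j' < j \<longrightarrow> g j' \<le> g j)}"
      using True lt by (auto, fastforce+)
    finally show ?thesis .
  next
    case False
    have "set (ewis_ge x (map (\<lambda>j. (f j, g j)) (a#js))) = set (ewis_ge x (map (\<lambda>j. (f j, g j)) js))"
      using False by simp
    also have "\<dots> = f ` {j \<in> set js. x \<le> g j \<and> (\<forall>j'\<in>set js. j' < j \<longrightarrow> g j' \<le> g j)}"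
      using Cons.IH[OF s] by simp
    also have "\<dots> = f ` {j \<in> set (a#js). x \<le> g j \<and> (\<forall>j'\<in>set (a#js). j' < j \<longrightarrow> g j' \<le> g j)}"
      using False lt by auto
    finally show ?thesis .
  qed
qed

lemma ewis_char:
  assumes "sorted_wrt (<) (js::nat list)"
  shows "set (ewis (map (\<lambda>j. (f j, g j)) js)) =
         f ` {j \<in> set js. (\<forall>j'\<in>set js. j' < j \<longrightarrow> g j' \<le> g j)}"
proof (cases js)
  case Nil then show ?thesis by simp
next
  case (Cons a js')
  have s: "sorted_wrt (<) js'" and lt: "\<forall>y\<in>set js'. a < y" using assms Cons by auto
  have "set (ewis (map (\<lambda>j. (f j, g j)) js)) = insert (f a) (set (ewis_ge (g a) (map (\<lambda>j. (f j, g j)) js')))"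
    using Cons by simp
  also have "\<dots> = insert (f a) (f ` {j \<in> set js'. g a \<le> g j \<and> (\<forall>j'\<in>set js'. j' < j \<longrightarrow> g j' \<le> g j)})"
    by (rule arg_cong[where f="insert (f a)"], rule ewis_ge_char[OF s])
  also have "\<dots> = f ` {j \<in> set js. (\<forall>j'\<in>set js. j' < j \<longrightarrow> g j' \<le> g j)}"
    using lt Cons by (auto, fastforce+)
  finally show ?thesis .
qed

lemma rd_le_antisym: "rd_le p q \<Longrightarrow> rd_le q p \<Longrightarrow> p = q"
  unfolding rd_le_def by (cases p; cases q) auto

lemma mrl_eq:
  assumes "p \<in> P" "rd_less p x" "\<forall>q\<in>P. rd_less q x \<longrightarrow> rd_le q p"
  shows "most_recent_loc P x = p"
  unfolding most_recent_loc_def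
proof (rule the_equality)
  show "p \<in> P \<and> rd_less p x \<and> (\<forall>q\<in>P. rd_less q x \<longrightarrow> rd_le q p)" using assms by blast
next
  fix p' assume h: "p' \<in> P \<and> rd_less p' x \<and> (\<forall>q\<in>P. rd_less q x \<longrightarrow> rd_le q p')"
  then have "rd_le p' p" using assms by blast
  moreover have "rd_le p p'" using h assms by blast
  ultimately show "p' = p" by (rule rd_le_antisym)
qed

lemma down_closed_eq:
  assumes "finite A" "\<forall>i\<in>A. 1 \<le> (i::nat)" "\<forall>i\<in>A. \<forall>i'. 1 \<le> i' \<and> i' \<le> i \<longrightarrow> i' \<in> A"
  shows "A = {1..card A}"
proof (cases "A = {}")
  case True then show ?thesis by simp
next
  case False
  have "A = {1..Max A}"
  proof
    show "A \<subseteq> {1..Max A}" using assms by auto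
    show "{1..Max A} \<subseteq> A"
    proof
      fix x assume x: "x \<in> {1..Max A}"
      have M: "Max A \<in> A" using Max_in[OF assms(1) False] .
      show "x \<in> A" by (rule assms(3)[rule_format, OF M]) (use x in auto)
    qed
  qed
  then show ?thesis by (metis card_atLeastAtMost diff_Suc_1)
qed




definition pick :: "(nat\<Rightarrow>nat\<Rightarrow>nat) \<Rightarrow> nat \<Rightarrow> nat \<Rightarrow> (nat\<Rightarrow>nat) \<Rightarrow> nat \<Rightarrow> bool" where
  "pick T L l h j \<longleftrightarrow> l \<le> j \<and> j \<le> L \<and> 0 < h j \<and>
      (\<forall>j'. l \<le> j' \<and> j' < j \<and> 0 < h j' \<longrightarrow> T j' (h j') \<le> T j (h j))"

primrec Hs :: "nat \<Rightarrow> (nat\<Rightarrow>nat) \<Rightarrow> (nat\<Rightarrow>nat\<Rightarrow>nat) \<Rightarrow> nat \<Rightarrow> nat \<Rightarrow> nat \<Rightarrow> nat" where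
  "Hs n lam T l 0 = col_len n lam"
| "Hs n lam T l (Suc m) = (\<lambda>j. if pick T (lam 1) l (Hs n lam T l m) j
       then Hs n lam T l m j - 1 else Hs n lam T l m j)"

definition Pth :: "(nat\<Rightarrow>nat\<Rightarrow>nat) \<Rightarrow> nat \<Rightarrow> nat \<Rightarrow> (nat\<Rightarrow>nat) \<Rightarrow> (nat\<times>nat) set" where
  "Pth T L l h = {(j, h j) | j. pick T L l h j}"

definition Mx :: "(nat\<Rightarrow>nat\<Rightarrow>nat) \<Rightarrow> nat \<Rightarrow> (nat\<Rightarrow>nat) \<Rightarrow> nat \<Rightarrow> nat" where
  "Mx T l h j = Max {T j' (h j') | j'. l \<le> j' \<and> j' < j \<and> 0 < h j'}"

locale ctx =
  fixes n :: nat and lam :: "nat \<Rightarrow> nat" and T :: "nat \<Rightarrow> nat \<Rightarrow> nat" and l :: nat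
  assumes n0: "0 < n" and part: "is_partition n lam" and ss: "semistandard n lam T"
    and l1: "1 \<le> l" and lL: "l < lam 1"
begin

abbreviation "Y \<equiv> young n lam"
abbreviation "c \<equiv> col_len n lam"
abbreviation "L \<equiv> lam 1"
abbreviation "H \<equiv> Hs n lam T l"
abbreviation "pk \<equiv> pick T L l"

lemma lam_mono: "1 \<le> i \<Longrightarrow> i \<le> i' \<Longrightarrow> i' \<le> n \<Longrightarrow> lam i' \<le> lam i"
  using part unfolding is_partition_def by blast

lemma Ychar: "1 \<le> j \<Longrightarrow> (j, i) \<in> Y \<longleftrightarrow> 1 \<le> i \<and> i \<le> c j"
proof -
  assume j: "1 \<le> j"
  let ?A = "{i \<in> {1..n}. j \<le> lam i}"
  have dc: "\<forall>i\<in>?A. \<forall>i'. 1 \<le> i' \<and> i' \<le> i \<longrightarrow> i' \<in> ?A"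
  proof (intro ballI allI impI)
    fix i i' assume a: "i \<in> ?A" "1 \<le> i' \<and> i' \<le> i"
    then have "lam i \<le> lam i'" using lam_mono[of i' i] by simp
    then show "i' \<in> ?A" using a by simp
  qed
  have eq: "?A = {1..card ?A}"
    by (rule down_closed_eq[OF _ _ dc]) simp_all
  define k where "k = card ?A"
  have ck: "c j = k" unfolding k_def col_len_def by simp
  have eqk: "?A = {1..k}" using eq unfolding k_def .
  have "i \<in> ?A \<longleftrightarrow> 1 \<le> i \<and> i \<le> c j" unfolding ck eqk by simp
  then show ?thesis using j unfolding young_def by auto
qed

lemma Y_col: "(j, i) \<in> Y \<Longrightarrow> 1 \<le> j \<and> j \<le> L"
proof -
  assume "(j, i) \<in> Y"
  then have h: "1 \<le> i" "i \<le> n" "1 \<le> j" "j \<le> lam i" unfolding young_def by auto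
  have "lam i \<le> lam 1" using lam_mono[of 1 i] h by simp
  then show ?thesis using h by simp
qed

lemma c_zero: "L < j \<Longrightarrow> c j = 0"
proof -
  assume "L < j"
  have "\<forall>i\<in>{1..n}. lam i < j"
  proof
    fix i assume "i \<in> {1..n}"
    then have "lam i \<le> lam 1" using lam_mono[of 1 i] by simp
    then show "lam i < j" using \<open>L < j\<close> by simp
  qed
  then have "{i \<in> {1..n}. j \<le> lam i} = {}" by force
  then show ?thesis unfolding col_len_def by simp
qed

lemma c_mono: "c (Suc j) \<le> c j"
  unfolding col_len_def by (rule card_mono) auto

lemma col1: "(j, i) \<in> Y \<Longrightarrow> (j, Suc i) \<in> Y \<Longrightarrow> T j i < T j (Suc i)"
proof -
  have "\<forall>j i. (j, i) \<in> Y \<and> (j, Suc i) \<in> Y \<longrightarrow> T j i < T j (Suc i)"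
    using ss unfolding semistandard_def by (rule conjunct2[THEN conjunct2])
  then show "(j, i) \<in> Y \<Longrightarrow> (j, Suc i) \<in> Y \<Longrightarrow> T j i < T j (Suc i)" by simp
qed

lemma rowle: "(j, i) \<in> Y \<Longrightarrow> (Suc j, i) \<in> Y \<Longrightarrow> T j i \<le> T (Suc j) i"
proof -
  have "\<forall>j i. (j, i) \<in> Y \<and> (Suc j, i) \<in> Y \<longrightarrow> T j i \<le> T (Suc j) i"
    using ss unfolding semistandard_def by (rule conjunct2[THEN conjunct1])
  then show "(j, i) \<in> Y \<Longrightarrow> (Suc j, i) \<in> Y \<Longrightarrow> T j i \<le> T (Suc j) i" by simp
qed

lemma colstrict: "(j, i) \<in> Y \<Longrightarrow> (j, i') \<in> Y \<Longrightarrow> i < i' \<Longrightarrow> T j i < T j i'"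
proof (induction i' arbitrary: i)
  case 0 then show ?case by simp
next
  case (Suc i')
  have j: "1 \<le> j" using Y_col[OF Suc.prems(1)] by simp
  have "1 \<le> i" using Suc.prems(1) Ychar[OF j] by simp
  then have y': "(j, i') \<in> Y" using Suc.prems Ychar[OF j] by simp
  have step: "T j i' < T j (Suc i')" by (rule col1[OF y' Suc.prems(2)])
  show ?case
  proof (cases "i < i'")
    case True then show ?thesis using Suc.IH[OF Suc.prems(1) y'] step by simp
  next
    case False then have "i = i'" using Suc.prems by simp
    then show ?thesis using step by simp
  qed
qed


lemma H_Suc_le: "H (Suc m) j \<le> H m j" and H_Suc_ge: "H m j - 1 \<le> H (Suc m) j"
  by auto

lemma H_anti: "m1 \<le> m2 \<Longrightarrow> H m2 j \<le> H m1 j"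
proof (induction m2)
  case 0 then show ?case by simp
next
  case (Suc m2)
  then show ?case using H_Suc_le[of m2 j] by (cases "m1 = Suc m2") auto
qed

lemma H_le_c: "H m j \<le> c j"
  using H_anti[of 0 m] by simp

lemma H_zero: "L < j \<Longrightarrow> H m j = 0"
  using H_le_c c_zero by (metis le_zero_eq)

lemma H_l: "H m l = c l - m"
proof (induction m)
  case 0 then show ?case by simp
next
  case (Suc m)
  have "pk (H m) l \<longleftrightarrow> 0 < H m l" unfolding pick_def using lL by auto
  then show ?case using Suc by auto
qed

lemma H_colmono: "l \<le> j \<Longrightarrow> H m (Suc j) \<le> H m j"
proof (induction m)
  case 0 then show ?case using c_mono by simp
next
  case (Suc m)
  have IH: "H m (Suc j) \<le> H m j" using Suc by blast
  show ?case
  proof (cases "H m (Suc j) < H m j")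
    case True then show ?thesis using H_Suc_le[of m "Suc j"] H_Suc_ge[of m j] by linarith
  next
    case False
    then have eq: "H m (Suc j) = H m j" using IH by simp
    show ?thesis
    proof (cases "pk (H m) j")
      case False then show ?thesis using eq H_Suc_le[of m "Suc j"] by simp
    next
      case True
      let ?h = "H m j"
      have j1: "1 \<le> j" using Suc.prems l1 by simp
      have hpos: "0 < ?h" using True unfolding pick_def by blast
      have "?h \<le> c (Suc j)" using eq H_le_c[of m "Suc j"] by simp
      then have ySj: "(Suc j, ?h) \<in> Y" using Ychar[of "Suc j"] hpos by simp
      have yj: "(j, ?h) \<in> Y" using Ychar[OF j1] hpos H_le_c[of m j] by simp
      have "Suc j \<le> L" using Y_col[OF ySj] by simp
      have rw: "T j ?h \<le> T (Suc j) ?h" by (rule rowle[OF yj ySj])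
      have "pk (H m) (Suc j)"
        unfolding pick_def
      proof (intro conjI allI impI)
        show "l \<le> Suc j" using Suc.prems by simp
        show "Suc j \<le> L" by fact
        show "0 < H m (Suc j)" using eq hpos by simp
        fix j' assume a: "l \<le> j' \<and> j' < Suc j \<and> 0 < H m j'"
        show "T j' (H m j') \<le> T (Suc j) (H m (Suc j))"
        proof (cases "j' < j")
          case True
          then have "T j' (H m j') \<le> T j ?h" using \<open>pk (H m) j\<close> a unfolding pick_def by blast
          then show ?thesis using rw eq by simp
        next
          case False
          then have "j' = j" using a by simp
          then show ?thesis using rw eq by simp
        qed
      qed
      then show ?thesis using True eq by simp
    qed
  qed
qed

lemma H_final: "l \<le> j \<Longrightarrow> H (c l) j = 0"
proof (induction j rule: dec_induct)
  case base then show ?case using H_l by simp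
next
  case (step j) then show ?case using H_colmono[of j "c l"] by simp
qed

end


context ctx begin

lemma in_Pth: "(a, b) \<in> Pth T L l h \<longleftrightarrow> pk h a \<and> b = h a"
  unfolding Pth_def by auto

lemma step_char:
  assumes S: "\<forall>j i. l \<le> j \<longrightarrow> ((j,i) \<in> S \<longleftrightarrow> 1 \<le> i \<and> i \<le> h j)"
    and z: "\<forall>j. L < j \<longrightarrow> h j = 0"
  shows "scan_step T L l S = Pth T L l h"
proof -
  let ?js = "filter (\<lambda>j. 0 < h j) [l..<Suc L]"
  have f: "filter (\<lambda>j. \<exists>i. (j, i) \<in> S) [l..<Suc L] = ?js"
  proof (rule filter_cong)
    fix j assume "j \<in> set [l..<Suc L]"
    then have "l \<le> j" by (simp only: set_upt atLeastLessThan_iff)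
    then show "(\<exists>i. (j, i) \<in> S) = (0 < h j)" using S by (auto intro: exI[of _ 1])
  qed simp
  have lo: "lowest S j = h j" if "j \<in> set ?js" for j
  proof -
    have "l \<le> j" "0 < h j" using that by auto
    then have "{i. (j, i) \<in> S} = {1..h j}" using S by auto
    moreover have "Max {1..h j} = h j" using \<open>0 < h j\<close> by (intro Max_eqI) auto
    ultimately show ?thesis unfolding lowest_def by simp
  qed
  have seq: "scan_seq T L l S = map (\<lambda>j. ((j, h j), T j (h j))) ?js"
    unfolding scan_seq_def f by (rule map_cong) (auto simp: lo)
  have sw: "sorted_wrt (<) ?js" by (rule sorted_wrt_filter) (rule sorted_wrt_upt)
  have "scan_step T L l S = (\<lambda>j. (j, h j)) ` {j \<in> set ?js. \<forall>j'\<in>set ?js. j' < j \<longrightarrow> T j' (h j') \<le> T j (h j)}"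
    unfolding scan_step_def seq using ewis_char[OF sw, of "\<lambda>j. (j, h j)" "\<lambda>j. T j (h j)"] by simp
  also have "\<dots> = Pth T L l h"
    unfolding Pth_def pick_def by (auto simp: less_Suc_eq_le)
  finally show ?thesis .
qed

lemma shape: "\<forall>j i. l \<le> j \<longrightarrow> ((j,i) \<in> Y - scan_removed n lam T l m \<longleftrightarrow> 1 \<le> i \<and> i \<le> H m j)"
proof (induction m)
  case 0 then show ?case using Ychar l1 by auto
next
  case (Suc m)
  have st: "scan_step T L l (Y - scan_removed n lam T l m) = Pth T L l (H m)"
    by (rule step_char[OF Suc]) (simp add: H_zero)
  have eq: "Y - scan_removed n lam T l (Suc m) = (Y - scan_removed n lam T l m) - Pth T L l (H m)"
    using st by auto
  show ?case
  proof (intro allI impI)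
    fix j i assume "l \<le> j"
    then show "(j, i) \<in> Y - scan_removed n lam T l (Suc m) \<longleftrightarrow> 1 \<le> i \<and> i \<le> H (Suc m) j"
    proof -
      have A: "(j, i) \<in> Y - scan_removed n lam T l (Suc m) \<longleftrightarrow>
          (j, i) \<in> Y - scan_removed n lam T l m \<and> \<not> (pk (H m) j \<and> i = H m j)"
        unfolding eq Diff_iff[of _ _ "Pth T L l (H m)"] in_Pth by (rule refl)
      have B: "(j, i) \<in> Y - scan_removed n lam T l m \<longleftrightarrow> 1 \<le> i \<and> i \<le> H m j"
        using Suc \<open>l \<le> j\<close> by blast
      show ?thesis
      proof (cases "pk (H m) j")
        case True
        then have "H (Suc m) j = H m j - 1" by simp
        then show ?thesis unfolding A B using True by auto
      next
        case False
        then have "H (Suc m) j = H m j" by simp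
        then show ?thesis unfolding A B using False by auto
      qed
    qed
  qed
qed

lemma path_eq: "scan_path n lam T l k = Pth T L l (H (c l - k))"
  unfolding scan_path_def by (rule step_char[OF shape]) (simp add: H_zero)

end


context ctx begin

lemma Mx_fin: "finite {T j' (h j') | j'. l \<le> j' \<and> j' < j \<and> 0 < h j'}"
proof -
  have "{T j' (h j') | j'. l \<le> j' \<and> j' < j \<and> 0 < h j'} \<subseteq> (\<lambda>j'. T j' (h j')) ` {..<j}" by auto
  then show ?thesis by (rule finite_subset) simp
qed

lemma Mx_ub: "l \<le> j' \<Longrightarrow> j' < j \<Longrightarrow> 0 < h j' \<Longrightarrow> T j' (h j') \<le> Mx T l h j"
  unfolding Mx_def by (rule Max_ge[OF Mx_fin]) blast

lemma Mx_in:
  assumes "l < j" "0 < h l"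
  obtains j0 where "l \<le> j0" "j0 < j" "0 < h j0" "Mx T l h j = T j0 (h j0)"
proof -
  have ne: "{T j' (h j') | j'. l \<le> j' \<and> j' < j \<and> 0 < h j'} \<noteq> {}" using assms by blast
  have "Mx T l h j \<in> {T j' (h j') | j'. l \<le> j' \<and> j' < j \<and> 0 < h j'}"
    unfolding Mx_def by (rule Max_in[OF Mx_fin ne])
  then show ?thesis using that by blast
qed

lemma mrv_A:
  assumes "pk h j" "i < h j"
  shows "most_recent_val T (Pth T L l h) (j, i) = T j (h j)"
proof -
  have "most_recent_loc (Pth T L l h) (j, i) = (j, h j)"
  proof (rule mrl_eq)
    show "(j, h j) \<in> Pth T L l h" unfolding in_Pth using assms by simp
    show "rd_less (j, h j) (j, i)" using assms unfolding rd_less_def rd_le_def by simp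
    show "\<forall>q\<in>Pth T L l h. rd_less q (j, i) \<longrightarrow> rd_le q (j, h j)"
    proof (intro ballI impI)
      fix q assume q: "q \<in> Pth T L l h" "rd_less q (j, i)"
      obtain a b where qab: "q = (a, b)" by (cases q)
      have b: "b = h a" using q(1) unfolding qab in_Pth by simp
      show "rd_le q (j, h j)" using q(2) unfolding qab b rd_less_def rd_le_def by auto
    qed
  qed
  then show ?thesis unfolding most_recent_val_def by simp
qed

lemma mrv_B:
  assumes lj: "l < j" and jL: "j \<le> L" and hl: "0 < h l" and np: "\<not> (pk h j \<and> i < h j)"
  shows "most_recent_val T (Pth T L l h) (j, i) = Mx T l h j"
proof -
  let ?J = "{j'. l \<le> j' \<and> j' < j \<and> 0 < h j' \<and> T j' (h j') = Mx T l h j}"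
  have finJ: "finite ?J" by (rule finite_subset[of _ "{..<j}"]) auto
  obtain j1 where j1: "l \<le> j1" "j1 < j" "0 < h j1" "Mx T l h j = T j1 (h j1)"
    using Mx_in[where j=j and h=h, OF lj hl] by blast
  have neJ: "?J \<noteq> {}" using j1 by auto
  define j0 where "j0 = Max ?J"
  have j0J: "j0 \<in> ?J" unfolding j0_def by (rule Max_in[OF finJ neJ])
  have j0max: "\<And>a. a \<in> ?J \<Longrightarrow> a \<le> j0" unfolding j0_def by (rule Max_ge[OF finJ])
  have pk0: "pk h j0"
    unfolding pick_def
  proof (intro conjI allI impI)
    show "l \<le> j0" "0 < h j0" using j0J by auto
    show "j0 \<le> L" using j0J jL by auto
    fix j' assume "l \<le> j' \<and> j' < j0 \<and> 0 < h j'"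
    then have "T j' (h j') \<le> Mx T l h j" using j0J by (intro Mx_ub) auto
    then show "T j' (h j') \<le> T j0 (h j0)" using j0J by simp
  qed
  have "most_recent_loc (Pth T L l h) (j, i) = (j0, h j0)"
  proof (rule mrl_eq)
    show "(j0, h j0) \<in> Pth T L l h" unfolding in_Pth using pk0 by simp
    show "rd_less (j0, h j0) (j, i)" using j0J unfolding rd_less_def rd_le_def by auto
    show "\<forall>q\<in>Pth T L l h. rd_less q (j, i) \<longrightarrow> rd_le q (j0, h j0)"
    proof (intro ballI impI)
      fix q assume q: "q \<in> Pth T L l h" "rd_less q (j, i)"
      obtain a b where qab: "q = (a, b)" by (cases q)
      have b: "b = h a" and pka: "pk h a" using q(1) unfolding qab in_Pth by simp_all
      have "a < j \<or> (a = j \<and> i \<le> b \<and> b \<noteq> i)" using q(2) unfolding qab rd_less_def rd_le_def by auto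
      then have aj: "a < j" using np pka b by auto
      have "a \<le> j0"
      proof (rule ccontr)
        assume "\<not> a \<le> j0"
        then have "j0 < a" by simp
        then have "T j0 (h j0) \<le> T a (h a)" using pka j0J unfolding pick_def by blast
        moreover have "T a (h a) \<le> Mx T l h j" using pka aj unfolding pick_def by (intro Mx_ub) auto
        ultimately have "a \<in> ?J" using j0J pka aj unfolding pick_def by auto
        then show False using j0max \<open>j0 < a\<close> by fastforce
      qed
      then show "rd_le q (j0, h j0)" unfolding qab b rd_le_def by auto
    qed
  qed
  then show ?thesis unfolding most_recent_val_def using j0J by simp
qed

lemma Dec:
  assumes "Suc m < c l" "l < j" "j \<le> L"
  shows "Mx T l (H (Suc m)) j < Mx T l (H m) j"
proof -
  have hl: "0 < H (Suc m) l" using H_l assms(1) by simp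
  obtain j0 where j0: "l \<le> j0" "j0 < j" "0 < H (Suc m) j0" "Mx T l (H (Suc m)) j = T j0 (H (Suc m) j0)"
    using Mx_in[where j=j and h="H (Suc m)", OF assms(2) hl] by blast
  have j01: "1 \<le> j0" using j0 l1 by simp
  show ?thesis
  proof (cases "pk (H m) j0")
    case True
    then have e: "H (Suc m) j0 = H m j0 - 1" by simp
    have pos: "0 < H m j0" using True unfolding pick_def by simp
    have y1: "(j0, H m j0) \<in> Y" using Ychar[OF j01] pos H_le_c[of m j0] by simp
    have pos2: "0 < H m j0 - 1" using j0(3) unfolding e .
    have y2: "(j0, H m j0 - 1) \<in> Y" unfolding Ychar[OF j01] using pos2 H_le_c[of m j0] by linarith
    have "T j0 (H m j0 - 1) < T j0 (H m j0)" by (rule colstrict[OF y2 y1]) (use pos in simp)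
    moreover have "T j0 (H m j0) \<le> Mx T l (H m) j" using j0 pos by (intro Mx_ub) auto
    ultimately show ?thesis using j0(4) e by simp
  next
    case False
    then have e: "H (Suc m) j0 = H m j0" by simp
    have "\<exists>j'. l \<le> j' \<and> j' < j0 \<and> 0 < H m j' \<and> \<not> T j' (H m j') \<le> T j0 (H m j0)"
      using False j0 e assms(3) unfolding pick_def by auto
    then obtain j' where j': "l \<le> j'" "j' < j0" "0 < H m j'" "T j0 (H m j0) < T j' (H m j')" by auto
    moreover have "T j' (H m j') \<le> Mx T l (H m) j" using j' j0 by (intro Mx_ub) auto
    ultimately show ?thesis using j0(4) e by simp
  qed
qed

lemma Dec_iter:
  assumes "m < m'" "m' < c l" "l < j" "j \<le> L"
  shows "Mx T l (H m') j < Mx T l (H m) j"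
  using assms(1,2)
proof (induction m')
  case 0 then show ?case by simp
next
  case (Suc m')
  have d: "Mx T l (H (Suc m')) j < Mx T l (H m') j" by (rule Dec) (use Suc.prems assms in auto)
  show ?case
  proof (cases "m = m'")
    case True then show ?thesis using d by simp
  next
    case False
    then have "Mx T l (H m') j < Mx T l (H m) j" using Suc by auto
    then show ?thesis using d by simp
  qed
qed

lemma crossing:
  fixes f :: "nat \<Rightarrow> nat"
  assumes "i \<le> f 0" "f N < i"
  shows "\<exists>m<N. i \<le> f m \<and> f (Suc m) < i"
  using assms(2)
proof (induction N)
  case 0 then show ?case using assms(1) by simp
next
  case (Suc N)
  show ?case
  proof (cases "f N < i")
    case True then show ?thesis using Suc by (meson less_SucI)
  next
    case False then show ?thesis using Suc.prems by (intro exI[of _ N]) simp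
  qed
qed

end


context ctx begin

lemma main:
  assumes jy: "(j, i) \<in> Y" and lj: "l < j"
  shows "(\<exists>k\<in>{1..c l}. (j, i) \<in> scan_path n lam T l k) \<and>
         (\<forall>k\<in>{1..c l}. (j, i) \<in> scan_path n lam T l k \<longrightarrow>
            most_recent_val T (scan_path n lam T l k) (j, i) =
            Max {most_recent_val T (scan_path n lam T l k') (j, i) | k'.
                   k' \<in> {1..c l} \<and>
                   most_recent_val T (scan_path n lam T l k') (j, i) \<le> T j i})"
proof -
  have j1: "1 \<le> j" and jL: "j \<le> L" using Y_col[OF jy] by auto
  have i1: "1 \<le> i" and ic: "i \<le> c j" using jy Ychar[OF j1] by auto
  define V where "V k' = most_recent_val T (scan_path n lam T l k') (j, i)" for k'
  have pathH: "scan_path n lam T l k = Pth T L l (H (c l - k))" for k by (rule path_eq)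
  have memP: "(a, b) \<in> scan_path n lam T l k \<longleftrightarrow> pk (H (c l - k)) a \<and> b = H (c l - k) a" for a b k
    unfolding pathH in_Pth by (rule refl)
  have part1: "\<exists>k\<in>{1..c l}. (j, i) \<in> scan_path n lam T l k"
  proof -
    have "i \<le> H 0 j" using ic by simp
    moreover have "H (c l) j < i" using H_final[of j] lj i1 by simp
    ultimately obtain m where m: "m < c l" "i \<le> H m j" "H (Suc m) j < i"
      using crossing[of i "\<lambda>m. H m j" "c l"] by blast
    have pk: "pk (H m) j"
    proof (rule ccontr)
      assume "\<not> pk (H m) j"
      then have "H (Suc m) j = H m j" by simp
      then show False using m by simp
    qed
    then have "H (Suc m) j = H m j - 1" by simp
    then have hm: "H m j = i" using m by linarith
    have "(j, i) \<in> scan_path n lam T l (c l - m)"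
      unfolding memP using pk hm m(1) by (simp add: diff_diff_cancel)
    moreover have "c l - m \<in> {1..c l}" using m(1) by simp
    ultimately show ?thesis by blast
  qed
  have part2: "V k = Max {V k' | k'. k' \<in> {1..c l} \<and> V k' \<le> T j i}"
    if k: "k \<in> {1..c l}" and jin: "(j, i) \<in> scan_path n lam T l k" for k
  proof -
    define m where "m = c l - k"
    have mc: "m < c l" using k unfolding m_def by auto
    have pkm: "pk (H m) j" and hm: "i = H m j" using jin unfolding memP m_def by auto
    have hlpos: "\<And>m'. m' < c l \<Longrightarrow> 0 < H m' l" using H_l by simp
    have Vm: "V k = Mx T l (H m) j"
      unfolding V_def pathH m_def[symmetric] using mrv_B[where h="H m" and i=i, OF lj jL hlpos[OF mc]] hm by simp
    have vle: "V k \<le> T j i"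
    proof -
      obtain j0 where j0: "l \<le> j0" "j0 < j" "0 < H m j0" "Mx T l (H m) j = T j0 (H m j0)"
        using Mx_in[where j=j and h="H m", OF lj hlpos[OF mc]] by blast
      have "T j0 (H m j0) \<le> T j (H m j)" using pkm j0 unfolding pick_def by blast
      then show ?thesis using Vm j0(4) hm by simp
    qed
    have bound: "V k' \<le> V k" if k': "k' \<in> {1..c l}" and vk': "V k' \<le> T j i" for k'
    proof -
      define m' where "m' = c l - k'"
      have mc': "m' < c l" using k' unfolding m'_def by auto
      have Vk': "V k' = most_recent_val T (Pth T L l (H m')) (j, i)"
        unfolding V_def pathH m'_def by simp
      consider "m' < m" | "m' = m" | "m < m'" by linarith
      then show ?thesis
      proof cases
        case 1
        have ge: "i \<le> H m' j" using H_anti[of m' m j] 1 hm by simp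
        have "T j i < V k'"
        proof (cases "pk (H m') j \<and> i < H m' j")
          case True
          then have "V k' = T j (H m' j)" using Vk' mrv_A by simp
          moreover have "(j, H m' j) \<in> Y" unfolding Ychar[OF j1] using ge i1 H_le_c[of m' j] by simp
          ultimately show ?thesis using colstrict[OF jy] True by simp
        next
          case False
          then have V': "V k' = Mx T l (H m') j" using Vk' mrv_B[where h="H m'" and i=i, OF lj jL hlpos[OF mc']] by simp
          have npk: "\<not> pk (H m') j"
          proof
            assume p: "pk (H m') j"
            then have "H m' j = i" using False ge by simp
            then have "H (Suc m') j = i - 1" using p by simp
            moreover have "H m j \<le> H (Suc m') j" using H_anti[of "Suc m'" m j] 1 by simp
            ultimately show False using hm i1 by simp
          qed
          have "\<exists>j'. l \<le> j' \<and> j' < j \<and> 0 < H m' j' \<and> \<not> T j' (H m' j') \<le> T j (H m' j)"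
            using npk lj jL ge i1 unfolding pick_def by auto
          then obtain j' where j': "l \<le> j'" "j' < j" "0 < H m' j'" "T j (H m' j) < T j' (H m' j')" by auto
          have "T j i \<le> T j (H m' j)"
          proof (cases "i < H m' j")
            case True
            have "(j, H m' j) \<in> Y" unfolding Ychar[OF j1] using ge i1 H_le_c[of m' j] by simp
            then show ?thesis using colstrict[OF jy _ True] by simp
          next
            case False then show ?thesis using ge by simp
          qed
          moreover have "T j' (H m' j') \<le> Mx T l (H m') j" using j' by (intro Mx_ub) auto
          ultimately show ?thesis using V' j' by simp
        qed
        then show ?thesis using vk' by simp
      next
        case 2
        then have "k' = k" using k k' unfolding m'_def m_def atLeastAtMost_iff by linarith
        then show ?thesis by simp
      next
        case 3
        have "H m' j \<le> H (Suc m) j" using H_anti[of "Suc m" m' j] 3 by simp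
        then have "H m' j < i" using pkm hm i1 by simp
        then have "V k' = Mx T l (H m') j" using Vk' mrv_B[where h="H m'" and i=i, OF lj jL hlpos[OF mc']] by simp
        then show ?thesis using Vm Dec_iter[OF 3 mc' lj jL] by simp
      qed
    qed
    have fin: "finite {V k' | k'. k' \<in> {1..c l} \<and> V k' \<le> T j i}"
      by (rule finite_subset[of _ "V ` {1..c l}"]) auto
    show ?thesis
      by (rule Max_eqI[OF fin, symmetric]) (use bound k vle in auto)
  qed
  show ?thesis using part1 part2 unfolding V_def by blast
qed

end


theorem lemma3p2:
  fixes n :: nat and lam :: "nat \<Rightarrow> nat" and T :: "nat \<Rightarrow> nat \<Rightarrow> nat" and l j i :: nat
  assumes "0 < n"
    and "is_partition n lam"
    and "semistandard n lam T"
    and "1 \<le> l" and "l < lam 1"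
    and "(j, i) \<in> young n lam"
    and "rd_less (l, 1) (j, i)"
  shows "(\<exists>k\<in>{1..col_len n lam l}. (j, i) \<in> scan_path n lam T l k) \<and>
         (\<forall>k\<in>{1..col_len n lam l}. (j, i) \<in> scan_path n lam T l k \<longrightarrow>
            most_recent_val T (scan_path n lam T l k) (j, i) =
            Max {most_recent_val T (scan_path n lam T l k') (j, i) | k'.
                   k' \<in> {1..col_len n lam l} \<and>
                   most_recent_val T (scan_path n lam T l k') (j, i) \<le> T j i})"
proof -
  interpret ctx n lam T l using assms(1-5) by unfold_locales
  have "1 \<le> i" using assms(6) unfolding young_def by auto
  then have "l < j" using assms(7) unfolding rd_less_def rd_le_def by auto
  then show ?thesis using main[OF assms(6)] by blast
qed

end
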